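(* Let $q=1-p=o\!\left(\frac{1}{n^{1.5}}\right)$. Then for all sufficiently large $n\in\mathbb{N}$ we have $u_3(n,p)=u_3'(n,p)=4$.
   Context: $G(n,p)$ is the Erdős–Rényi random graph on $n$ labelled vertices (vertex set $V$), each edge present independently with probability $p=p(n)$; $\mathbb{P}_{n,p}$ is the corresponding probability and $q=1-p$. A diameter graph in $\mathbb{R}^d$ is a graph $(V,E)$ with $V\subset\mathbb{R}^d$ finite and $E=\{\{\mathbf{x},\mathbf{y}\}\subseteq V: |\mathbf{x}-\mathbf{y}|=\operatorname{diam}V\}$, where $\operatorname{diam}V=\max_{\mathbf{x},\mathbf{y}\in V}|\mathbf{x}-\mathbf{y}|$ (Euclidean norm); a graph is a diameter graph in $\mathbb{R}^d$ if it is isomorphic to one. $u_d(n,p)$ is the largest positive integer $k$ such that $\mathbb{P}_{n,p}\big(\exists W\subseteq V,\ |W|=k,\ G[W]$ is a diameter graph in $\mathbb{R}^d$ and $\chi(G[W])=d+1\big)>\frac12$, where $G[W]$ is the induced subgraph; if no such $k$ exists, $u_d(n,p)=0$. $u_d'(n,p)$ is defined identically with the additional requirement that $G[W]$ be connected. *)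

theory Defs
  imports "HOL-Analysis.Analysis" "HOL-Library.Landau_Symbols"
begin

text \<open>Graphs on the vertex set V = {0..<n}: an edge set is a set of 2-element subsets.\<close>

definition all_edges :: "nat \<Rightarrow> nat set set" where
  "all_edges n = {e. \<exists>x y. x \<noteq> y \<and> x < n \<and> y < n \<and> e = {x, y}}"

definition prob_Gnp :: "nat \<Rightarrow> real \<Rightarrow> (nat set set \<Rightarrow> bool) \<Rightarrow> real" where
  "prob_Gnp n p Q =
     (\<Sum>E\<in>Pow (all_edges n).
        if Q E then p ^ card E * (1 - p) ^ (card (all_edges n) - card E) else 0)"

text \<open>The induced subgraph G[W] (vertex set W, edge set = edges of E inside W)
  is a diameter graph in the Euclidean space 'a: it is isomorphic to the diameter
  graph of some finite point set, i.e. there is an injective placement f of W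
  such that two distinct vertices are adjacent iff their images are at distance
  diam (f ` W).\<close>
definition is_diameter_graph ::
    "('a::euclidean_space) itself \<Rightarrow> nat set \<Rightarrow> nat set set \<Rightarrow> bool" where
  "is_diameter_graph T W E \<longleftrightarrow>
     (\<exists>f :: nat \<Rightarrow> 'a. inj_on f W \<and>
        (\<forall>x\<in>W. \<forall>y\<in>W. x \<noteq> y \<longrightarrow>
            ({x, y} \<in> E \<longleftrightarrow> dist (f x) (f y) = diameter (f ` W))))"

definition chromatic_number :: "nat set \<Rightarrow> nat set set \<Rightarrow> nat" where
  "chromatic_number W E =
     (LEAST k. \<exists>c :: nat \<Rightarrow> nat. (\<forall>x\<in>W. c x < k) \<and>
        (\<forall>x\<in>W. \<forall>y\<in>W. x \<noteq> y \<and> {x, y} \<in> E \<longrightarrow> c x \<noteq> c y))"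

definition connected_induced :: "nat set \<Rightarrow> nat set set \<Rightarrow> bool" where
  "connected_induced W E \<longleftrightarrow>
     (\<forall>x\<in>W. \<forall>y\<in>W.
        (x, y) \<in> ({(a, b). a \<in> W \<and> b \<in> W \<and> a \<noteq> b \<and> {a, b} \<in> E})\<^sup>*)"

definition diam_event ::
    "('a::euclidean_space) itself \<Rightarrow> bool \<Rightarrow> nat \<Rightarrow> nat \<Rightarrow> nat set set \<Rightarrow> bool" where
  "diam_event T conn n k E \<longleftrightarrow>
     (\<exists>W. W \<subseteq> {0..<n} \<and> card W = k \<and> is_diameter_graph T W E \<and>
          chromatic_number W E = DIM('a) + 1 \<and> (conn \<longrightarrow> connected_induced W E))"

text \<open>u_d(n,p) (conn = False) and u_d'(n,p) (conn = True): the largest positive k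
  with probability > 1/2, or 0 if none. (Such k are at most n.)\<close>
definition u_gen :: "('a::euclidean_space) itself \<Rightarrow> bool \<Rightarrow> nat \<Rightarrow> real \<Rightarrow> nat" where
  "u_gen T conn n p = Max ({k. 0 < k \<and> prob_Gnp n p (diam_event T conn n k) > 1/2} \<union> {0})"

definition u_d :: "('a::euclidean_space) itself \<Rightarrow> nat \<Rightarrow> real \<Rightarrow> nat" where
  "u_d T n p = u_gen T False n p"

definition u_d' :: "('a::euclidean_space) itself \<Rightarrow> nat \<Rightarrow> real \<Rightarrow> nat" where
  "u_d' T n p = u_gen T True n p"

end

theory Submission
  imports Defs
begin


lemma bac_cab: "cross3 (a::real^3) (cross3 u v) = (a \<bullet> v) *\<^sub>R u - (a \<bullet> u) *\<^sub>R v"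
  unfolding vec_eq_iff forall_3 by (simp add: cross3_def inner_vec_def sum_3 vector_def algebra_simps)

lemma par_n: fixes a n :: "real^3" assumes "cross3 a n = 0" shows "(n \<bullet> n) *\<^sub>R a = (n \<bullet> a) *\<^sub>R n"
proof -
  have "cross3 n (cross3 a n) = (n \<bullet> n) *\<^sub>R a - (n \<bullet> a) *\<^sub>R n" by (rule bac_cab)
  with assms show ?thesis by simp
qed

lemma sq_dist: "dist (a::real^3) b = D \<Longrightarrow> (a - b) \<bullet> (a - b) = D\<^sup>2"
  by (metis dist_norm power2_norm_eq_inner)

lemma geo:
  fixes A B C X Y :: "real^3"
  assumes "dist A B = D" "dist A C = D" "dist B C = D"
    "dist A X = D" "dist B X = D" "dist C X = D"
    "dist A Y = D" "dist B Y = D" "dist C Y = D"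
    "dist X Y \<le> D" "X \<noteq> Y" "D > 0"
  shows False
proof -
  define u where "u = B - A"
  define v where "v = C - A"
  define x where "x = X - A"
  define y where "y = Y - A"
  have uu: "u \<bullet> u = D\<^sup>2" using sq_dist[OF assms(1)] unfolding u_def by (simp add: inner_commute inner_diff)
  have vv: "v \<bullet> v = D\<^sup>2" using sq_dist[OF assms(2)] unfolding v_def by (simp add: inner_commute inner_diff)
  have xx: "x \<bullet> x = D\<^sup>2" using sq_dist[OF assms(4)] unfolding x_def by (simp add: inner_commute inner_diff)
  have yy: "y \<bullet> y = D\<^sup>2" using sq_dist[OF assms(7)] unfolding y_def by (simp add: inner_commute inner_diff)
  have "B - C = u - v" "B - X = u - x" "C - X = v - x" "B - Y = u - y" "C - Y = v - y" "X - Y = x - y"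
    by (simp_all add: u_def v_def x_def y_def)
  then have e: "(u - v) \<bullet> (u - v) = D\<^sup>2" "(u - x) \<bullet> (u - x) = D\<^sup>2" "(v - x) \<bullet> (v - x) = D\<^sup>2"
     "(u - y) \<bullet> (u - y) = D\<^sup>2" "(v - y) \<bullet> (v - y) = D\<^sup>2"
    using sq_dist[OF assms(3)] sq_dist[OF assms(5)] sq_dist[OF assms(6)] sq_dist[OF assms(8)] sq_dist[OF assms(9)]
    by metis+
  have uv: "u \<bullet> v = D\<^sup>2/2" using e(1) uu vv by (simp add: inner_diff inner_commute algebra_simps)
  have ux: "u \<bullet> x = D\<^sup>2/2" using e(2) uu xx by (simp add: inner_diff inner_commute algebra_simps)
  have vx: "v \<bullet> x = D\<^sup>2/2" using e(3) vv xx by (simp add: inner_diff inner_commute algebra_simps)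
  have uy: "u \<bullet> y = D\<^sup>2/2" using e(4) uu yy by (simp add: inner_diff inner_commute algebra_simps)
  have vy: "v \<bullet> y = D\<^sup>2/2" using e(5) vv yy by (simp add: inner_diff inner_commute algebra_simps)
  have "norm (x - y) \<le> D" using assms(10) by (simp add: x_def y_def dist_norm)
  then have "(norm (x - y))\<^sup>2 \<le> D\<^sup>2" using assms(12) by (simp add: power_mono)
  then have xyle: "(x - y) \<bullet> (x - y) \<le> D\<^sup>2" by (simp add: power2_norm_eq_inner)
  have t: "x \<bullet> y \<ge> D\<^sup>2/2" using xyle xx yy by (simp add: inner_diff inner_commute algebra_simps)
  define n where "n = cross3 u v"
  have nn: "n \<bullet> n = (u \<bullet> u) * (v \<bullet> v) - (u \<bullet> v)\<^sup>2"
    unfolding n_def by (simp add: dot_cross power2_eq_square inner_commute)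
  have nnpos: "n \<bullet> n > 0" using assms(12) unfolding nn uu vv uv by (simp add: power2_eq_square field_simps)
  define w where "w = x - y"
  define r where "r = x + y - (2/3) *\<^sub>R (u + v)"
  have wu: "w \<bullet> u = 0" "w \<bullet> v = 0" using ux uy vx vy by (simp_all add: w_def inner_diff inner_commute)
  have ru: "r \<bullet> u = 0" "r \<bullet> v = 0" using ux uy vx vy uu vv uv
    by (simp_all add: r_def inner_diff inner_add inner_commute algebra_simps)
  have wr: "w \<bullet> r = 0" using wu xx yy
    by (simp add: r_def w_def inner_diff inner_add inner_commute algebra_simps)
  have rr: "r \<bullet> r = 2 * (x \<bullet> y) + 2 * D\<^sup>2 / 3" using ux uy vx vy uu vv uv xx yy
    by (simp add: r_def inner_diff inner_add inner_commute algebra_simps)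
  have rrpos: "r \<bullet> r > 0" proof -
    have "D\<^sup>2 > 0" using assms(12) by simp
    then show ?thesis using rr t by linarith
  qed
  have wn: "cross3 w n = 0" unfolding n_def bac_cab using wu by simp
  have rn: "cross3 r n = 0" unfolding n_def bac_cab using ru by simp
  have W: "(n \<bullet> n) *\<^sub>R w = (n \<bullet> w) *\<^sub>R n" by (rule par_n[OF wn])
  have R: "(n \<bullet> n) *\<^sub>R r = (n \<bullet> r) *\<^sub>R n" by (rule par_n[OF rn])
  have "((n \<bullet> n) *\<^sub>R w) \<bullet> ((n \<bullet> n) *\<^sub>R r) = 0" using wr by simp
  then have "(n \<bullet> w) * (n \<bullet> r) * (n \<bullet> n) = 0" unfolding W R by (simp add: algebra_simps)
  then have "n \<bullet> w = 0 \<or> n \<bullet> r = 0" using nnpos by auto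
  moreover have "w \<noteq> 0" using assms(11) by (simp add: w_def x_def y_def)
  moreover have "r \<noteq> 0" using rrpos by auto
  ultimately show False using W R nnpos by auto
qed


lemma finite_all_edges: "finite (all_edges n)"
proof -
  have "all_edges n \<subseteq> Pow {0..<n}" unfolding all_edges_def by auto
  then show ?thesis by (rule finite_subset) simp
qed

lemma pow_binom:
  fixes p :: real
  assumes "finite B"
  shows "(\<Sum>E\<in>Pow B. p ^ card E * (1 - p) ^ (card B - card E)) = 1"
  using assms
proof (induction B rule: finite_induct)
  case empty then show ?case by simp
next
  case (insert x B)
  have inj: "inj_on (insert x) (Pow B)" using insert.hyps
    by (smt (verit, ccfv_SIG) PowD inj_onI insert_ident subset_iff)
  have disj: "Pow B \<inter> insert x ` Pow B = {}" using insert.hyps by auto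
  have fin: "finite (Pow B)" using insert.hyps by simp
  have c1: "\<And>E. E \<in> Pow B \<Longrightarrow> card (insert x E) = Suc (card E)"
    using insert.hyps by (meson PowD card_insert_disjoint finite_subset subsetD)
  have c2: "\<And>E. E \<in> Pow B \<Longrightarrow> card E \<le> card B"
    using insert.hyps by (simp add: card_mono)
  have "(\<Sum>E\<in>Pow (insert x B). p ^ card E * (1 - p) ^ (card (insert x B) - card E))
      = (\<Sum>E\<in>Pow B. p ^ card E * (1 - p) ^ (Suc (card B) - card E))
        + (\<Sum>E\<in>insert x ` Pow B. p ^ card E * (1 - p) ^ (Suc (card B) - card E))"
    unfolding Pow_insert using insert.hyps disj fin by (simp add: sum.union_disjoint)
  also have "(\<Sum>E\<in>insert x ` Pow B. p ^ card E * (1 - p) ^ (Suc (card B) - card E))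
     = (\<Sum>E\<in>Pow B. p ^ card (insert x E) * (1 - p) ^ (Suc (card B) - card (insert x E)))"
    by (simp add: sum.reindex[OF inj])
  also have "\<dots> = (\<Sum>E\<in>Pow B. p * (p ^ card E * (1 - p) ^ (card B - card E)))"
    by (rule sum.cong) (auto simp: c1)
  also have "(\<Sum>E\<in>Pow B. p ^ card E * (1 - p) ^ (Suc (card B) - card E))
     = (\<Sum>E\<in>Pow B. (1 - p) * (p ^ card E * (1 - p) ^ (card B - card E)))"
    by (rule sum.cong) (auto simp: c2 Suc_diff_le)
  finally show ?case using insert.IH by (simp add: sum_distrib_left[symmetric])
qed

lemma prob_missing:
  assumes "S \<subseteq> all_edges n"
  shows "prob_Gnp n p (\<lambda>E. S \<inter> E = {}) = (1 - p) ^ card S"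
proof -
  let ?A = "all_edges n"
  have finA: "finite ?A" by (rule finite_all_edges)
  have finS: "finite S" using assms finA finite_subset by blast
  let ?f = "\<lambda>E. p ^ card E * (1 - p) ^ (card ?A - card E)"
  have "prob_Gnp n p (\<lambda>E. S \<inter> E = {}) = (\<Sum>E\<in>{E\<in>Pow ?A. S \<inter> E = {}}. ?f E)"
    unfolding prob_Gnp_def by (simp add: sum.inter_filter[symmetric] finA)
  also have "{E\<in>Pow ?A. S \<inter> E = {}} = Pow (?A - S)" by auto
  also have "(\<Sum>E\<in>Pow (?A - S). ?f E)
      = (\<Sum>E\<in>Pow (?A - S). (1-p)^card S * (p ^ card E * (1 - p) ^ (card (?A - S) - card E)))"
  proof (rule sum.cong)
    fix E assume E: "E \<in> Pow (?A - S)"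
    have "card E \<le> card (?A - S)" using E finA by (simp add: card_mono)
    moreover have "card (?A - S) = card ?A - card S" using assms finS by (simp add: card_Diff_subset)
    moreover have "card S \<le> card ?A" using assms finA by (simp add: card_mono)
    ultimately have "card ?A - card E = card S + (card (?A - S) - card E)" by linarith
    then show "?f E = (1-p)^card S * (p ^ card E * (1 - p) ^ (card (?A - S) - card E))"
      by (simp add: power_add)
  qed simp
  also have "\<dots> = (1-p)^card S" using pow_binom[of "?A - S" p] finA
    by (simp add: sum_distrib_left[symmetric])
  finally show ?thesis .
qed

lemma prob_total: "prob_Gnp n p (\<lambda>E. True) = 1"
  using prob_missing[of "{}" n p] by simp

lemma prob_compl: "prob_Gnp n p Q + prob_Gnp n p (\<lambda>E. \<not> Q E) = 1"
proof -
  have "prob_Gnp n p Q + prob_Gnp n p (\<lambda>E. \<not> Q E) = prob_Gnp n p (\<lambda>E. True)"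
    unfolding prob_Gnp_def by (simp add: sum.distrib[symmetric]) (rule sum.cong, auto)
  then show ?thesis using prob_total by simp
qed

lemma weight_nonneg: "0 \<le> p \<Longrightarrow> p \<le> 1 \<Longrightarrow> 0 \<le> (p::real) ^ a * (1 - p) ^ b"
  by simp

lemma prob_mono:
  assumes "0 \<le> p" "p \<le> 1" "\<And>E. E \<in> Pow (all_edges n) \<Longrightarrow> Q E \<Longrightarrow> Q' E"
  shows "prob_Gnp n p Q \<le> prob_Gnp n p Q'"
  unfolding prob_Gnp_def using assms by (intro sum_mono) auto

lemma prob_union:
  assumes "0 \<le> p" "p \<le> 1" "finite I"
  shows "prob_Gnp n p (\<lambda>E. \<exists>i\<in>I. Q i E) \<le> (\<Sum>i\<in>I. prob_Gnp n p (Q i))"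
proof -
  let ?w = "\<lambda>E. p ^ card E * (1 - p) ^ (card (all_edges n) - card E)"
  have "prob_Gnp n p (\<lambda>E. \<exists>i\<in>I. Q i E) \<le> (\<Sum>E\<in>Pow (all_edges n). \<Sum>i\<in>I. if Q i E then ?w E else 0)"
    unfolding prob_Gnp_def
  proof (rule sum_mono)
    fix E
    show "(if \<exists>i\<in>I. Q i E then ?w E else 0) \<le> (\<Sum>i\<in>I. if Q i E then ?w E else 0)"
    proof (cases "\<exists>i\<in>I. Q i E")
      case True
      then obtain i where i: "i \<in> I" "Q i E" by blast
      have "(if Q i E then ?w E else 0) \<le> (\<Sum>i\<in>I. if Q i E then ?w E else 0)"
        by (rule member_le_sum[OF i(1)]) (use assms in auto)
      then show ?thesis using True i by simp
    next
      case False then show ?thesis using assms by (simp add: sum_nonneg)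
    qed
  qed
  also have "\<dots> = (\<Sum>i\<in>I. prob_Gnp n p (Q i))" unfolding prob_Gnp_def by (rule sum.swap)
  finally show ?thesis .
qed



lemma no_five:
  assumes dg: "is_diameter_graph TYPE(real^3) W E" and fin: "finite W"
    and inW: "a \<in> W" "b \<in> W" "c \<in> W" "d \<in> W" "e \<in> W"
    and dist5: "distinct [a,b,c,d,e]"
    and E: "{a,b} \<in> E" "{a,c} \<in> E" "{b,c} \<in> E" "{a,d} \<in> E" "{b,d} \<in> E" "{c,d} \<in> E"
       "{a,e} \<in> E" "{b,e} \<in> E" "{c,e} \<in> E"
  shows False
proof -
  obtain f :: "nat \<Rightarrow> real^3" where inj: "inj_on f W" and
    fE: "\<forall>x\<in>W. \<forall>y\<in>W. x \<noteq> y \<longrightarrow> ({x, y} \<in> E \<longleftrightarrow> dist (f x) (f y) = diameter (f ` W))"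
    using dg unfolding is_diameter_graph_def by blast
  define D where "D = diameter (f ` W)"
  have bd: "bounded (f ` W)" using fin by (simp add: finite_imp_bounded)
  have le: "\<And>x y. x \<in> W \<Longrightarrow> y \<in> W \<Longrightarrow> dist (f x) (f y) \<le> D"
    unfolding D_def using bd by (intro diameter_bounded_bound) auto
  have eq: "\<And>x y. x \<in> W \<Longrightarrow> y \<in> W \<Longrightarrow> x \<noteq> y \<Longrightarrow> {x,y} \<in> E \<Longrightarrow> dist (f x) (f y) = D"
    using fE unfolding D_def by blast
  have neq: "\<And>x y. x \<in> W \<Longrightarrow> y \<in> W \<Longrightarrow> x \<noteq> y \<Longrightarrow> f x \<noteq> f y"
    using inj by (meson inj_on_contraD)
  have "dist (f a) (f b) = D" using eq inW dist5 E by auto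
  moreover have "f a \<noteq> f b" using neq inW dist5 by auto
  ultimately have Dpos: "D > 0" by auto
  show False
    apply (rule geo[of "f a" "f b" D "f c" "f d" "f e"])
    using eq inW E le neq dist5 Dpos by auto
qed

lemma key:
  assumes dg: "is_diameter_graph TYPE(real^3) W E" and fin: "finite W" and c5: "card W \<ge> 5"
    and chi: "chromatic_number W E = 4"
    and H: "\<And>v x y. v \<in> W \<Longrightarrow> x \<in> W \<Longrightarrow> y \<in> W \<Longrightarrow> v \<noteq> x \<Longrightarrow> v \<noteq> y
              \<Longrightarrow> {v,x} \<notin> E \<Longrightarrow> {v,y} \<notin> E \<Longrightarrow> x = y"
  shows False
proof -
  define R where "R = {(x,y). x \<in> W \<and> y \<in> W \<and> (x = y \<or> {x,y} \<notin> E)}"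
  have eqv: "equiv W R"
  proof (rule equivI)
    show "refl_on W R" unfolding R_def refl_on_def by auto
    show "sym R" unfolding R_def sym_def by (auto simp: insert_commute)
    show "trans R"
    proof (rule transI)
      fix x y z assume xy0: "(x,y) \<in> R" and yz0: "(y,z) \<in> R"
      then have W3: "x \<in> W" "y \<in> W" "z \<in> W" and xy: "x = y \<or> {x, y} \<notin> E"
        and yz: "y = z \<or> {y, z} \<notin> E" unfolding R_def by auto
      have "x = z \<or> {x, z} \<notin> E"
      proof (cases "x = y \<or> y = z")
        case True then show ?thesis using xy yz by auto
      next
        case False
        then have "{y,x} \<notin> E" "{y,z} \<notin> E" using xy yz by (auto simp: insert_commute)
        then have "x = z" using H[of y x z] False W3 by auto
        then show ?thesis by simp
      qed
      then show "(x,z) \<in> R" using W3 unfolding R_def by auto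
    qed
  qed (auto simp: R_def)
  have adjR: "\<And>x y. x \<in> W \<Longrightarrow> y \<in> W \<Longrightarrow> (x,y) \<notin> R \<longleftrightarrow> x \<noteq> y \<and> {x,y} \<in> E"
    unfolding R_def by auto
  have finQ: "finite (W // R)" using fin eqv by (metis equiv_type finite_quotient)
  show False
  proof (cases "card (W // R) \<le> 3")
    case True
    obtain g where g: "bij_betw g (W // R) {0..<card (W // R)}"
      using ex_bij_betw_finite_nat[OF finQ] by blast
    define col where "col x = g (R``{x})" for x
    have "chromatic_number W E \<le> 3"
      unfolding chromatic_number_def
    proof (rule Least_le, rule exI[of _ col], intro conjI ballI impI)
      fix x assume "x \<in> W"
      then have "R``{x} \<in> W // R" by (rule quotientI)
      then have "g (R``{x}) < card (W // R)" using g by (auto simp: bij_betw_def)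
      then show "col x < 3" using True col_def by simp
    next
      fix x y assume x: "x \<in> W" and y: "y \<in> W" and xy: "x \<noteq> y \<and> {x, y} \<in> E"
      have "(x,y) \<notin> R" using adjR x y xy by blast
      then have "R``{x} \<noteq> R``{y}" using equiv_class_eq_iff[OF eqv] x y by blast
      moreover have "R``{x} \<in> W // R" "R``{y} \<in> W // R" using x y by (auto intro: quotientI)
      ultimately show "col x \<noteq> col y" using g unfolding col_def bij_betw_def inj_on_def by blast
    qed
    then show False using chi by simp
  next
    case False
    then obtain S where S: "S \<subseteq> W // R" "card S = 4"
      using obtain_subset_with_card_n[of 4 "W // R"] by auto
    then obtain C1 S' where S1: "S = insert C1 S'" "C1 \<notin> S'" "card S' = 3"
      using card_Suc_eq[of S 3] by auto
    then obtain C2 C3 C4 where S2: "S' = {C2,C3,C4}" "C2 \<noteq> C3" "C3 \<noteq> C4" "C2 \<noteq> C4"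
      using card_3_iff[of S'] S1(3) by metis
    have Cs: "C1 \<in> W // R" "C2 \<in> W // R" "C3 \<in> W // R" "C4 \<in> W // R"
      using S S1 S2 by auto
    have dC: "distinct [C1,C2,C3,C4]" using S1 S2 by auto
    obtain a where a: "C1 = R``{a}" "a \<in> W" using Cs(1) by (rule quotientE)
    obtain b where b: "C2 = R``{b}" "b \<in> W" using Cs(2) by (rule quotientE)
    obtain c where c: "C3 = R``{c}" "c \<in> W" using Cs(3) by (rule quotientE)
    obtain d where d: "C4 = R``{d}" "d \<in> W" using Cs(4) by (rule quotientE)
    have cne: "C1 \<noteq> C2" "C1 \<noteq> C3" "C1 \<noteq> C4" "C2 \<noteq> C3" "C2 \<noteq> C4" "C3 \<noteq> C4"
      using dC by simp_all
    have rne: "R``{a} \<noteq> R``{b}" "R``{a} \<noteq> R``{c}" "R``{a} \<noteq> R``{d}"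
        "R``{b} \<noteq> R``{c}" "R``{b} \<noteq> R``{d}" "R``{c} \<noteq> R``{d}"
      using cne unfolding a(1) b(1) c(1) d(1) by simp_all
    have rne': "R``{b} \<noteq> R``{a}" "R``{c} \<noteq> R``{a}" "R``{d} \<noteq> R``{a}"
        "R``{c} \<noteq> R``{b}" "R``{d} \<noteq> R``{b}" "R``{d} \<noteq> R``{c}"
      using rne by (simp_all add: eq_commute)
    have nR: "\<And>x y. x \<in> {a,b,c,d} \<Longrightarrow> y \<in> {a,b,c,d} \<Longrightarrow> x \<noteq> y \<Longrightarrow> (x,y) \<notin> R"
    proof
      fix x y assume xy: "x \<in> {a,b,c,d}" "y \<in> {a,b,c,d}" "x \<noteq> y" "(x,y) \<in> R"
      then have "R``{x} = R``{y}" using equiv_class_eq_iff[OF eqv, of x y] by blast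
      then show False using xy(1-3) rne rne' by blast
    qed
    have dabcd: "distinct [a,b,c,d]"
    proof -
      have "a \<noteq> b" "a \<noteq> c" "a \<noteq> d" "b \<noteq> c" "b \<noteq> d" "c \<noteq> d"
        using rne by auto
      then show ?thesis by simp
    qed
    have "card {a,b,c,d} = 4" using dabcd by simp
    then have "W - {a,b,c,d} \<noteq> {}"
    proof (intro notI)
      assume "W - {a,b,c,d} = {}" then have "W \<subseteq> {a,b,c,d}" by blast
      then have "card W \<le> card {a,b,c,d}" by (rule card_mono[rotated]) simp
      then show False using c5 \<open>card {a,b,c,d} = 4\<close> by simp
    qed
    then obtain e where e: "e \<in> W" "e \<notin> {a,b,c,d}" by blast
    have abcd: "a \<in> W" "b \<in> W" "c \<in> W" "d \<in> W" using a b c d by auto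
    have E6: "{a,b} \<in> E" "{a,c} \<in> E" "{a,d} \<in> E" "{b,c} \<in> E" "{b,d} \<in> E" "{c,d} \<in> E"
      using nR[of a b] nR[of a c] nR[of a d] nR[of b c] nR[of b d] nR[of c d]
        adjR[of a b] adjR[of a c] adjR[of a d] adjR[of b c] adjR[of b d] adjR[of c d] abcd dabcd by auto
    have at_most: "\<And>x y. x \<in> {a,b,c,d} \<Longrightarrow> y \<in> {a,b,c,d} \<Longrightarrow> x \<noteq> y \<Longrightarrow> (e,x) \<in> R \<Longrightarrow> (e,y) \<in> R \<Longrightarrow> False"
    proof -
      fix x y assume xy: "x \<in> {a,b,c,d}" "y \<in> {a,b,c,d}" "x \<noteq> y" "(e,x) \<in> R" "(e,y) \<in> R"
      have "sym R" "trans R" using eqv by (auto simp: equiv_def)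
      then have "(x,y) \<in> R" using xy(4,5) by (meson symD transD)
      then show False using nR xy(1-3) by blast
    qed
    have eadj: "\<And>x. x \<in> {a,b,c,d} \<Longrightarrow> (e,x) \<notin> R \<Longrightarrow> {x,e} \<in> E"
      using adjR abcd e by (auto simp: insert_commute)
    have E6': "{b,a} \<in> E" "{c,a} \<in> E" "{d,a} \<in> E" "{c,b} \<in> E" "{d,b} \<in> E" "{d,c} \<in> E"
      using E6 by (simp_all add: insert_commute)
    have ea: "(e,a) \<notin> R \<Longrightarrow> {a,e} \<in> E" and eb: "(e,b) \<notin> R \<Longrightarrow> {b,e} \<in> E"
      and ec: "(e,c) \<notin> R \<Longrightarrow> {c,e} \<in> E" and ed: "(e,d) \<notin> R \<Longrightarrow> {d,e} \<in> E"
      using eadj by auto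
    have ee: "e \<noteq> a" "e \<noteq> b" "e \<noteq> c" "e \<noteq> d" using e by auto
    have am: "(e,a) \<in> R \<Longrightarrow> (e,b) \<in> R \<Longrightarrow> False" "(e,a) \<in> R \<Longrightarrow> (e,c) \<in> R \<Longrightarrow> False"
      "(e,a) \<in> R \<Longrightarrow> (e,d) \<in> R \<Longrightarrow> False" "(e,b) \<in> R \<Longrightarrow> (e,c) \<in> R \<Longrightarrow> False"
      "(e,b) \<in> R \<Longrightarrow> (e,d) \<in> R \<Longrightarrow> False" "(e,c) \<in> R \<Longrightarrow> (e,d) \<in> R \<Longrightarrow> False"
      using at_most[of a b] at_most[of a c] at_most[of a d] at_most[of b c] at_most[of b d] at_most[of c d] dabcd
      by auto
    show False
    proof (cases "(e,a) \<in> R")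
      case True
      show False
        apply (rule no_five[OF dg fin, of b c d a e]) using abcd e dabcd E6 E6' ea eb ec ed ee am True by auto
    next
      case na: False
      show False
      proof (cases "(e,b) \<in> R")
        case True
        show False
          apply (rule no_five[OF dg fin, of a c d b e]) using abcd e dabcd E6 E6' ea eb ec ed ee am na True by auto
      next
        case nb: False
        show False
        proof (cases "(e,c) \<in> R")
          case True
          show False
            apply (rule no_five[OF dg fin, of a b d c e]) using abcd e dabcd E6 E6' ea eb ec ed ee am na nb True by auto
        next
          case nc: False
          show False
            apply (rule no_five[OF dg fin, of a b c d e]) using abcd e dabcd E6 E6' ea eb ec ed ee am na nb nc by auto
        qed
      qed
    qed
  qed
qed



definition tp :: "nat \<Rightarrow> real^3" where
  "tp x = (if x = 0 then vector [1,0,0] else if x = 1 then vector [0,1,0]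
           else if x = 2 then vector [0,0,1] else vector [1,1,1])"

lemma tp_dist: "x < 4 \<Longrightarrow> y < 4 \<Longrightarrow> x \<noteq> y \<Longrightarrow> dist (tp x) (tp y) = sqrt 2"
  by (simp add: dist_norm norm_eq_sqrt_inner inner_vec_def sum_3 tp_def)

lemma W4: "{0,1,2,3::nat} = {..<4}" by auto

lemma tp_diam: "diameter (tp ` {..<4}) = sqrt 2"
proof (rule antisym)
  show "diameter (tp ` {..<4}) \<le> sqrt 2"
  proof (rule diameter_le)
    fix u v assume "u \<in> tp ` {..<4}" "v \<in> tp ` {..<4}"
    then obtain x y where "x < 4" "y < 4" "u = tp x" "v = tp y" by auto
    then show "norm (u - v) \<le> sqrt 2"
      using tp_dist[of x y] by (cases "x = y") (auto simp: dist_norm)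
  qed simp
  have "dist (tp 0) (tp 1) \<le> diameter (tp ` {..<4})"
    by (rule diameter_bounded_bound) (auto intro: finite_imp_bounded)
  then show "sqrt 2 \<le> diameter (tp ` {..<4})" using tp_dist[of 0 1] by simp
qed

lemma tp_inj: "inj_on tp {..<4}"
  unfolding inj_on_def
proof (intro ballI impI)
  fix x y assume "x \<in> {..<4::nat}" "y \<in> {..<4::nat}" "tp x = tp y"
  then show "x = y" using tp_dist[of x y] by (cases "x = y") auto
qed

lemma K4_event:
  assumes n: "4 \<le> n" and E: "\<forall>x<4. \<forall>y<4. x \<noteq> y \<longrightarrow> {x,y} \<in> E"
  shows "diam_event TYPE(real^3) conn n 4 E"
  unfolding diam_event_def
proof (intro exI[of _ "{..<4}"] conjI impI)
  show "{..<4} \<subseteq> {0..<n}" using n by auto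
  show "card {..<4::nat} = 4" by simp
  show "is_diameter_graph TYPE(real^3) {..<4} E"
    unfolding is_diameter_graph_def
    using tp_inj tp_diam tp_dist E by (intro exI[of _ tp]) auto
  show "chromatic_number {..<4} E = DIM(real^3) + 1"
  proof -
    have "chromatic_number {..<4} E = 4"
      unfolding chromatic_number_def
    proof (rule Least_equality)
      show "\<exists>c::nat\<Rightarrow>nat. (\<forall>x\<in>{..<4::nat}. c x < 4) \<and> (\<forall>x\<in>{..<4}. \<forall>y\<in>{..<4}. x \<noteq> y \<and> {x, y} \<in> E \<longrightarrow> c x \<noteq> c y)"
        by (intro exI[of _ id]) auto
    next
      fix k :: nat assume "\<exists>c. (\<forall>x\<in>{..<4::nat}. c x < k) \<and> (\<forall>x\<in>{..<4}. \<forall>y\<in>{..<4}. x \<noteq> y \<and> {x, y} \<in> E \<longrightarrow> c x \<noteq> c y)"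
      then obtain c where c: "\<forall>x\<in>{..<4::nat}. c x < k" "\<forall>x\<in>{..<4}. \<forall>y\<in>{..<4}. x \<noteq> y \<and> {x, y} \<in> E \<longrightarrow> c x \<noteq> c y"
        by blast
      have "inj_on c {..<4}" using c(2) E unfolding inj_on_def by auto
      moreover have "c ` {..<4} \<subseteq> {..<k}" using c(1) by auto
      ultimately have "card {..<4::nat} \<le> card {..<k}" by (rule card_inj_on_le) simp
      then show "4 \<le> k" by simp
    qed
    then show ?thesis by simp
  qed
  show "connected_induced {..<4} E"
    unfolding connected_induced_def
  proof (intro ballI)
    fix x y assume "x \<in> {..<4::nat}" "y \<in> {..<4::nat}"
    then show "(x, y) \<in> {(a, b). a \<in> {..<4} \<and> b \<in> {..<4} \<and> a \<noteq> b \<and> {a, b} \<in> E}\<^sup>*"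
      using E by (cases "x = y") auto
  qed
qed



definition bad :: "nat \<Rightarrow> nat set set \<Rightarrow> bool" where
  "bad n E \<longleftrightarrow> (\<exists>i\<in>Sigma {..<n} (\<lambda>_. Sigma {..<n} (\<lambda>_. {..<n})).
      (case i of (v,x,y) \<Rightarrow> v \<noteq> x \<and> v \<noteq> y \<and> x \<noteq> y \<and> {v,x} \<notin> E \<and> {v,y} \<notin> E))"

lemma upper_event:
  assumes k: "5 \<le> k" and ev: "diam_event TYPE(real^3) conn n k E"
  shows "bad n E"
proof (rule ccontr)
  assume nb: "\<not> bad n E"
  obtain W where W: "W \<subseteq> {0..<n}" "card W = k" "is_diameter_graph TYPE(real^3) W E"
    "chromatic_number W E = DIM(real^3) + 1"
    using ev unfolding diam_event_def by blast
  have fin: "finite W" using W(1) finite_subset by blast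
  show False
  proof (rule key[OF W(3) fin])
    show "5 \<le> card W" using W(2) k by simp
    show "chromatic_number W E = 4" using W(4) by simp
    fix v x y assume "v \<in> W" "x \<in> W" "y \<in> W" "v \<noteq> x" "v \<noteq> y" "{v, x} \<notin> E" "{v, y} \<notin> E"
    note h = this
    show "x = y"
    proof (rule ccontr)
      assume xy: "x \<noteq> y"
      have mem: "(v,x,y) \<in> Sigma {..<n} (\<lambda>_. Sigma {..<n} (\<lambda>_. {..<n}))"
        using W(1) h(1-3) by auto
      have "bad n E" unfolding bad_def
        by (rule bexI[OF _ mem]) (use h xy in simp)
      with nb show False by simp
    qed
  qed
qed

lemma prob_bad:
  assumes p: "0 \<le> p" "p \<le> 1"
  shows "prob_Gnp n p (bad n) \<le> real n ^ 3 * (1 - p)^2"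
proof -
  let ?I = "Sigma {..<n} (\<lambda>_. Sigma {..<n} (\<lambda>_. {..<n}))"
  let ?Q = "\<lambda>i E. (case i of (v,x,y) \<Rightarrow> v \<noteq> x \<and> v \<noteq> y \<and> x \<noteq> y \<and> {v,x} \<notin> E \<and> {v,y} \<notin> E)"
  have "prob_Gnp n p (bad n) = prob_Gnp n p (\<lambda>E. \<exists>i\<in>?I. ?Q i E)"
    unfolding bad_def by simp
  also have "\<dots> \<le> (\<Sum>i\<in>?I. prob_Gnp n p (?Q i))"
    by (rule prob_union[OF p]) simp
  also have "\<dots> \<le> (\<Sum>i\<in>?I. (1 - p)^2)"
  proof (rule sum_mono)
    fix i assume i: "i \<in> ?I"
    obtain v x y where vxy: "i = (v,x,y)" by (cases i) auto
    have lt: "v < n" "x < n" "y < n" using i vxy by auto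
    show "prob_Gnp n p (?Q i) \<le> (1 - p)^2"
    proof (cases "v \<noteq> x \<and> v \<noteq> y \<and> x \<noteq> y")
      case True
      let ?S = "{{v,x},{v,y}}"
      have Ssub: "?S \<subseteq> all_edges n" using True lt unfolding all_edges_def by blast
      have cS: "card ?S = 2" using True by (simp add: doubleton_eq_iff)
      have "prob_Gnp n p (?Q i) \<le> prob_Gnp n p (\<lambda>E. ?S \<inter> E = {})"
        by (rule prob_mono[OF p]) (auto simp: vxy)
      also have "\<dots> = (1-p)^2" using prob_missing[OF Ssub, of p] cS by simp
      finally show ?thesis .
    next
      case False
      then have "prob_Gnp n p (?Q i) = 0" unfolding prob_Gnp_def vxy by auto
      then show ?thesis by simp
    qed
  qed
  also have "\<dots> = real n ^ 3 * (1 - p)^2" by (simp add: card_cartesian_product power3_eq_cube)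
  finally show ?thesis .
qed

lemma prob_K4:
  assumes p: "0 \<le> p" "p \<le> 1" and n: "4 \<le> n"
  shows "prob_Gnp n p (diam_event TYPE(real^3) conn n 4) \<ge> 1 - 16 * (1 - p)"
proof -
  let ?G = "\<lambda>E. \<forall>x<4. \<forall>y<4. x \<noteq> y \<longrightarrow> {x,y} \<in> E"
  have "prob_Gnp n p (\<lambda>E. \<not> ?G E) \<le> prob_Gnp n p (\<lambda>E. \<exists>e\<in>all_edges 4. {e} \<inter> E = {})"
    by (rule prob_mono[OF p]) (auto simp: all_edges_def)
  also have "\<dots> \<le> (\<Sum>e\<in>all_edges 4. prob_Gnp n p (\<lambda>E. {e} \<inter> E = {}))"
    by (rule prob_union[OF p]) (rule finite_all_edges)
  also have "\<dots> = (\<Sum>e\<in>all_edges 4. (1 - p))"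
  proof (rule sum.cong)
    fix e assume "e \<in> all_edges 4"
    then obtain x y where xy: "x \<noteq> y" "x < 4" "y < 4" "e = {x,y}" unfolding all_edges_def by blast
    then have "x < n" "y < n" using n by linarith+
    then have "{e} \<subseteq> all_edges n" using xy unfolding all_edges_def by blast
    then show "prob_Gnp n p (\<lambda>E. {e} \<inter> E = {}) = 1 - p" using prob_missing[of "{e}" n p] by simp
  qed simp
  also have "\<dots> = card (all_edges 4) * (1 - p)" by simp
  also have "\<dots> \<le> 16 * (1 - p)"
  proof -
    have "all_edges 4 \<subseteq> Pow {0..<4}" unfolding all_edges_def by auto
    then have "card (all_edges 4) \<le> card (Pow {0..<4::nat})" by (rule card_mono[rotated]) simp
    then have "card (all_edges 4) \<le> 16" by (simp add: card_Pow)
    then show ?thesis using p by (intro mult_right_mono) auto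
  qed
  finally have "prob_Gnp n p (\<lambda>E. \<not> ?G E) \<le> 16 * (1 - p)" .
  moreover have "prob_Gnp n p ?G \<le> prob_Gnp n p (diam_event TYPE(real^3) conn n 4)"
    by (rule prob_mono[OF p]) (rule K4_event[OF n])
  moreover have "prob_Gnp n p ?G + prob_Gnp n p (\<lambda>E. \<not> ?G E) = 1" by (rule prob_compl)
  ultimately show ?thesis by linarith
qed

lemma u_gen_4:
  assumes p: "0 \<le> p" "p \<le> 1" and n: "4 \<le> n" and q1: "16 * (1 - p) < 1/2"
    and q2: "real n ^ 3 * (1 - p)^2 < 1/2"
  shows "u_gen TYPE(real^3) conn n p = 4"
proof -
  let ?K = "{k. 0 < k \<and> prob_Gnp n p (diam_event TYPE(real^3) conn n k) > 1/2}"
  have "4 \<in> ?K" using prob_K4[OF p n, of conn] q1 by simp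
  moreover have "\<forall>k\<in>?K. k \<le> 4"
  proof (rule ballI, rule ccontr)
    fix k assume k: "k \<in> ?K" "\<not> k \<le> 4"
    have "prob_Gnp n p (diam_event TYPE(real^3) conn n k) \<le> prob_Gnp n p (bad n)"
      by (rule prob_mono[OF p]) (rule upper_event, use k in auto)
    then show False using prob_bad[OF p, of n] q2 k by simp
  qed
  ultimately have "?K \<union> {0} \<subseteq> {..4}" "4 \<in> ?K \<union> {0}" by auto
  then show ?thesis unfolding u_gen_def
    by (intro Max_eqI) (auto intro: finite_subset)
qed



theorem theorem20:
  fixes p :: "nat \<Rightarrow> real"
  assumes "\<forall>n. 0 \<le> p n \<and> p n \<le> 1"
    and "(\<lambda>n. 1 - p n) \<in> o(\<lambda>n. 1 / real n powr 1.5)"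
  shows "\<forall>\<^sub>F n in sequentially.
           u_d TYPE(real^3) n (p n) = 4 \<and> u_d' TYPE(real^3) n (p n) = 4"
proof -
  have ev1: "\<forall>\<^sub>F n in sequentially. norm (1 - p n) \<le> (1/64) * norm (1 / real n powr 1.5)"
    by (rule landau_o.smallD[OF assms(2)]) simp
  have ev2: "\<forall>\<^sub>F n in sequentially. 4 \<le> n" by (rule eventually_ge_at_top)
  show ?thesis
    using ev1 ev2
  proof eventually_elim
    case (elim n)
    have p: "0 \<le> p n" "p n \<le> 1" using assms(1) by auto
    have npos: "real n > 0" using elim(2) by simp
    have np: "real n powr 1.5 > 0" using npos by simp
    have "1 \<le> real n powr 1.5" using elim(2) by (simp add: ge_one_powr_ge_zero)
    have q: "(1 - p n) * real n powr 1.5 \<le> 1/64"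
      using elim(1) p np by (simp add: field_simps)
    have q1: "1 - p n \<le> 1/64"
    proof -
      have "(1 - p n) * 1 \<le> (1 - p n) * real n powr 1.5"
        using p \<open>1 \<le> real n powr 1.5\<close> by (intro mult_left_mono) auto
      then show ?thesis using q by simp
    qed
    have sq: "real n powr 1.5 * real n powr 1.5 = real n ^ 3"
      using npos by (simp add: powr_add[symmetric])
    have le: "((1 - p n) * real n powr 1.5)^2 \<le> (1/64)^2"
      using q p np by (intro power_mono) auto
    have e1: "((1 - p n) * real n powr 1.5)^2 = (1 - p n)^2 * (real n powr 1.5 * real n powr 1.5)"
      by (simp add: power2_eq_square)
    have e: "((1 - p n) * real n powr 1.5)^2 = real n ^ 3 * (1 - p n)^2"
      unfolding e1 sq by simp
    have q2: "real n ^ 3 * (1 - p n)^2 \<le> 1/4096"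
      using le unfolding e by (simp add: power2_eq_square)
    show ?case unfolding u_d_def u_d'_def
      using u_gen_4[OF p elim(2)] q1 q2 by simp
  qed
qed

end
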